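(* Let $G=(V,E)$ be a forest with $V=\{1,\dots,n\}$ and adjacency matrix $A$. Then $$\beta(G)=\min\{\mathbf{e}^\top x \mid x \text{ solves } \mathrm{LCP}(A+I,-\mathbf{e})\},$$ where $I$ is the $n\times n$ identity matrix and $\mathbf{e}$ is the all-ones vector in $\mathbb{R}^n$.
   Context: A forest is a simple graph (finite, undirected, no loops or multiple edges) with no cycles, i.e. a disjoint union of trees. Its adjacency matrix $A=[a_{ij}]$ has $a_{ij}=1$ iff $\{i,j\}\in E$. An independent set is maximal if it is not properly contained in another independent set; $\beta(G)$ denotes the minimum cardinality of a maximal independent set of $G$ (the independent domination number). A vector $x\in\mathbb{R}^n$ solves $\mathrm{LCP}(M,q)$ if $x\geq 0$, $Mx+q\geq 0$ and $x^\top(Mx+q)=0$. *)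

theory Defs
  imports Complex_Main
begin

definition simple_graph :: "nat \<Rightarrow> (nat \<Rightarrow> nat \<Rightarrow> bool) \<Rightarrow> bool" where
  "simple_graph n E \<longleftrightarrow>
     (\<forall>i j. E i j \<longrightarrow> i \<in> {1..n} \<and> j \<in> {1..n}) \<and>
     (\<forall>i j. E i j \<longrightarrow> E j i) \<and> (\<forall>i. \<not> E i i)"

definition is_cycle :: "(nat \<Rightarrow> nat \<Rightarrow> bool) \<Rightarrow> nat list \<Rightarrow> bool" where
  "is_cycle E vs \<longleftrightarrow> length vs \<ge> 3 \<and> distinct vs \<and>
     (\<forall>k < length vs - 1. E (vs ! k) (vs ! Suc k)) \<and> E (last vs) (hd vs)"

definition forest :: "nat \<Rightarrow> (nat \<Rightarrow> nat \<Rightarrow> bool) \<Rightarrow> bool" where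
  "forest n E \<longleftrightarrow> simple_graph n E \<and> (\<nexists>vs. is_cycle E vs)"

definition adj_matrix :: "(nat \<Rightarrow> nat \<Rightarrow> bool) \<Rightarrow> nat \<Rightarrow> nat \<Rightarrow> real" where
  "adj_matrix E i j = (if E i j then 1 else 0)"

definition independent_set :: "nat \<Rightarrow> (nat \<Rightarrow> nat \<Rightarrow> bool) \<Rightarrow> nat set \<Rightarrow> bool" where
  "independent_set n E S \<longleftrightarrow> S \<subseteq> {1..n} \<and> (\<forall>i\<in>S. \<forall>j\<in>S. \<not> E i j)"

definition maximal_independent_set :: "nat \<Rightarrow> (nat \<Rightarrow> nat \<Rightarrow> bool) \<Rightarrow> nat set \<Rightarrow> bool" where
  "maximal_independent_set n E S \<longleftrightarrow> independent_set n E S \<and>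
     (\<nexists>T. independent_set n E T \<and> S \<subset> T)"

definition indep_dom_number :: "nat \<Rightarrow> (nat \<Rightarrow> nat \<Rightarrow> bool) \<Rightarrow> nat" where
  "indep_dom_number n E = Min (card ` {S. maximal_independent_set n E S})"

definition solves_LCP :: "nat \<Rightarrow> (nat \<Rightarrow> nat \<Rightarrow> real) \<Rightarrow> (nat \<Rightarrow> real) \<Rightarrow> (nat \<Rightarrow> real) \<Rightarrow> bool" where
  "solves_LCP n M q x \<longleftrightarrow>
     (\<forall>i. i \<notin> {1..n} \<longrightarrow> x i = 0) \<and>
     (\<forall>i\<in>{1..n}. x i \<ge> 0) \<and>
     (\<forall>i\<in>{1..n}. (\<Sum>j=1..n. M i j * x j) + q i \<ge> 0) \<and>
     (\<Sum>i=1..n. x i * ((\<Sum>j=1..n. M i j * x j) + q i)) = 0"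

end

theory Submission
  imports Defs
begin

lemma path_cycle:
  fixes U :: "nat set"
  assumes irr: "\<And>i. \<not> E i i" and fin: "finite U" and ne: "U \<noteq> {}"
  and deg: "\<And>a. a \<in> U \<Longrightarrow> \<exists>b c. b \<noteq> c \<and> b \<in> U \<and> c \<in> U \<and> E a b \<and> E a c"
  shows "\<exists>vs. is_cycle E vs"
proof -
  define P where "P vs \<longleftrightarrow> vs \<noteq> [] \<and> distinct vs \<and> set vs \<subseteq> U \<and>
     (\<forall>k < length vs - 1. E (vs ! k) (vs ! Suc k))" for vs
  obtain u0 where "u0 \<in> U" using ne by auto
  hence "P [u0]" by (simp add: P_def)
  moreover have "\<forall>y. P y \<longrightarrow> length y < card U + 1"
  proof (intro allI impI)
    fix y assume "P y"
    hence "card (set y) \<le> card U" "length y = card (set y)"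
      using fin card_mono distinct_card unfolding P_def by metis+
    thus "length y < card U + 1" by simp
  qed
  ultimately obtain vs where Pvs: "P vs" and mx: "\<forall>y. P y \<longrightarrow> length y \<le> length vs"
    using Lattices_Big.ex_has_greatest_nat[of P "[u0]" length "card U + 1"] by blast
  define a where "a = last vs"
  have ne1: "vs \<noteq> []" and dis: "distinct vs" and sub: "set vs \<subseteq> U"
    and pth: "\<forall>k < length vs - 1. E (vs ! k) (vs ! Suc k)" using Pvs by (auto simp: P_def)
  have aU: "a \<in> U" using ne1 sub a_def by auto
  have alast: "vs ! (length vs - 1) = a" using ne1 a_def by (simp add: last_conv_nth)
  obtain c where cU: "c \<in> U" and Eac: "E a c" and cp: "length vs \<ge> 2 \<longrightarrow> c \<noteq> vs ! (length vs - 2)"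
    using deg[OF aU] by blast
  show ?thesis
  proof (cases "c \<in> set vs")
    case False
    have "P (vs @ [c])"
      unfolding P_def
    proof (intro conjI)
      show "\<forall>k<length (vs @ [c]) - 1. E ((vs @ [c]) ! k) ((vs @ [c]) ! Suc k)"
      proof (intro allI impI)
        fix k assume k: "k < length (vs @ [c]) - 1"
        show "E ((vs @ [c]) ! k) ((vs @ [c]) ! Suc k)"
        proof (cases "k < length vs - 1")
          case True
          hence "Suc k < length vs" by linarith
          thus ?thesis using pth True by (simp add: nth_append)
        next
          case False
          hence "k = length vs - 1" using k by simp
          thus ?thesis using alast Eac ne1 by (simp add: nth_append)
        qed
      qed
    qed (use False dis sub cU in auto)
    thus ?thesis using mx by fastforce
  next
    case True
    then obtain k where k: "k < length vs" "vs ! k = c" by (metis in_set_conv_nth)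
    have "c \<noteq> a" using Eac irr by metis
    hence k1: "k \<noteq> length vs - 1" using alast k by auto
    have k2: "k \<noteq> length vs - 2"
    proof
      assume "k = length vs - 2"
      moreover have "length vs \<ge> 2" using k k1 by linarith
      ultimately show False using cp k by simp
    qed
    have k3: "k + 3 \<le> length vs" using k k1 k2 by linarith
    have "is_cycle E (drop k vs)"
      unfolding is_cycle_def
    proof (intro conjI)
      show "3 \<le> length (drop k vs)" using k3 by simp
      show "distinct (drop k vs)" using dis by simp
      show "\<forall>i<length (drop k vs) - 1. E (drop k vs ! i) (drop k vs ! Suc i)"
        using pth k3 by (auto simp: nth_drop)
      have "last (drop k vs) = a" using a_def k by simp
      moreover have "hd (drop k vs) = c" using k by (simp add: hd_drop_conv_nth)
      ultimately show "E (last (drop k vs)) (hd (drop k vs))" using Eac by simp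
    qed
    thus ?thesis by blast
  qed
qed


definition ns :: "nat \<Rightarrow> (nat\<Rightarrow>nat\<Rightarrow>bool) \<Rightarrow> (nat \<Rightarrow> real) \<Rightarrow> nat \<Rightarrow> real" where
  "ns n E x i = (\<Sum>j\<in>{1..n}. adj_matrix E i j * x j)"

definition sol :: "nat \<Rightarrow> (nat\<Rightarrow>nat\<Rightarrow>bool) \<Rightarrow> (nat \<Rightarrow> real) \<Rightarrow> bool" where
  "sol n E x \<longleftrightarrow> (\<forall>i. i \<notin> {1..n} \<longrightarrow> x i = 0) \<and> (\<forall>i\<in>{1..n}. x i \<ge> 0) \<and>
     (\<forall>i\<in>{1..n}. x i + ns n E x i \<ge> 1) \<and> (\<forall>i\<in>{1..n}. x i > 0 \<longrightarrow> x i + ns n E x i = 1)"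

lemma Msum:
  assumes "i \<in> {1..n}"
  shows "(\<Sum>j=1..n. (adj_matrix E i j + (if i = j then 1 else 0)) * x j) = x i + ns n E x i"
proof -
  have "(\<Sum>j=1..n. (adj_matrix E i j + (if i = j then 1 else 0)) * x j)
      = (\<Sum>j=1..n. adj_matrix E i j * x j) + (\<Sum>j=1..n. (if i = j then x j else 0))"
    by (subst sum.distrib[symmetric]) (rule sum.cong, auto simp: distrib_right)
  also have "(\<Sum>j=1..n. (if i = j then x j else 0)) = x i" using assms by (simp add: sum.delta)
  finally show ?thesis by (simp add: ns_def)
qed

lemma sol_iff:
  "solves_LCP n (\<lambda>i j. adj_matrix E i j + (if i = j then 1 else 0)) (\<lambda>i. - 1) x \<longleftrightarrow> sol n E x"
proof -
  have eq: "\<And>i. i \<in> {1..n} \<Longrightarrow> (\<Sum>j=1..n. (adj_matrix E i j + (if i = j then 1 else 0)) * x j) = x i + ns n E x i"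
    using Msum by blast
  show ?thesis
  proof
    assume a: "solves_LCP n (\<lambda>i j. adj_matrix E i j + (if i = j then 1 else 0)) (\<lambda>i. - 1) x"
    have z: "\<forall>i. i \<notin> {1..n} \<longrightarrow> x i = 0" and nn: "\<forall>i\<in>{1..n}. x i \<ge> 0"
      and ge: "\<forall>i\<in>{1..n}. x i + ns n E x i \<ge> 1"
      and s0: "(\<Sum>i=1..n. x i * (x i + ns n E x i - 1)) = 0"
      using a eq unfolding solves_LCP_def by auto
    have "\<forall>i\<in>{1..n}. x i * (x i + ns n E x i - 1) = 0"
      using s0 nn ge by (subst (asm) sum_nonneg_eq_0_iff) auto
    hence "\<forall>i\<in>{1..n}. x i > 0 \<longrightarrow> x i + ns n E x i = 1" by auto
    thus "sol n E x" using z nn ge by (simp add: sol_def)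
  next
    assume "sol n E x"
    hence z: "\<forall>i. i \<notin> {1..n} \<longrightarrow> x i = 0" and nn: "\<forall>i\<in>{1..n}. x i \<ge> 0"
      and ge: "\<forall>i\<in>{1..n}. x i + ns n E x i \<ge> 1"
      and eq1: "\<forall>i\<in>{1..n}. x i > 0 \<longrightarrow> x i + ns n E x i = 1" by (auto simp: sol_def)
    have "\<forall>i\<in>{1..n}. x i * (x i + ns n E x i - 1) = 0"
    proof
      fix i assume i: "i \<in> {1..n}"
      show "x i * (x i + ns n E x i - 1) = 0"
        using nn eq1 i by (cases "x i > 0") force+
    qed
    hence "(\<Sum>i=1..n. x i * (x i + ns n E x i - 1)) = 0" by (rule sum.neutral)
    thus "solves_LCP n (\<lambda>i j. adj_matrix E i j + (if i = j then 1 else 0)) (\<lambda>i. - 1) x"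
      using z nn ge eq unfolding solves_LCP_def by simp
  qed
qed

lemma ns_ge_term:
  assumes "\<forall>i\<in>{1..n}. x i \<ge> 0" "j \<in> {1..n}" "E i j"
  shows "ns n E x i \<ge> x j"
proof -
  have "adj_matrix E i j * x j \<le> ns n E x i" unfolding ns_def
    by (rule member_le_sum) (use assms in \<open>auto simp: adj_matrix_def\<close>)
  thus ?thesis using assms by (simp add: adj_matrix_def)
qed

lemma ns_nonneg:
  assumes "\<forall>i\<in>{1..n}. x i \<ge> 0"
  shows "ns n E x i \<ge> 0"
  unfolding ns_def using assms by (intro sum_nonneg) (auto simp: adj_matrix_def)

lemma ns_pos_ex:
  assumes "ns n E x i \<noteq> 0"
  shows "\<exists>j\<in>{1..n}. E i j \<and> x j \<noteq> 0"
proof (rule ccontr)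
  assume "\<not> ?thesis"
  hence "\<forall>j\<in>{1..n}. adj_matrix E i j * x j = 0" by (auto simp: adj_matrix_def)
  hence "ns n E x i = 0" unfolding ns_def by (rule sum.neutral)
  thus False using assms by simp
qed

lemma ns_single:
  assumes "b \<in> {1..n}" "\<And>j. j \<in> {1..n} \<Longrightarrow> j \<noteq> b \<Longrightarrow> E i j \<Longrightarrow> x j = 0"
  shows "ns n E x i = adj_matrix E i b * x b"
proof -
  have "ns n E x i = adj_matrix E i b * x b + (\<Sum>j\<in>{1..n} - {b}. adj_matrix E i j * x j)"
    unfolding ns_def using assms(1) by (simp add: sum.remove)
  also have "(\<Sum>j\<in>{1..n} - {b}. adj_matrix E i j * x j) = 0"
    using assms(2) by (intro sum.neutral) (auto simp: adj_matrix_def)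
  finally show ?thesis by simp
qed

context
  fixes n :: nat and E :: "nat \<Rightarrow> nat \<Rightarrow> bool"
  assumes FO: "forest n E"
begin

lemma EV: "E i j \<Longrightarrow> i \<in> {1..n} \<and> j \<in> {1..n}" using FO by (simp add: forest_def simple_graph_def)
lemma Esym: "E i j \<Longrightarrow> E j i" using FO by (simp add: forest_def simple_graph_def)
lemma Eirr: "\<not> E i i" using FO by (simp add: forest_def simple_graph_def)
lemma nocyc: "\<not> is_cycle E vs" using FO by (simp add: forest_def)

lemma nocyc_set:
  assumes "U \<subseteq> {1..n}" "U \<noteq> {}"
    "\<And>a. a \<in> U \<Longrightarrow> \<exists>b c. b \<noteq> c \<and> b \<in> U \<and> c \<in> U \<and> E a b \<and> E a c"
  shows False
  using path_cycle[of E U] assms nocyc Eirr finite_subset by blast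


lemma sol_le1: assumes "sol n E x" "i \<in> {1..n}" shows "x i \<le> 1"
proof -
  have nn: "\<forall>i\<in>{1..n}. x i \<ge> 0" using assms by (simp add: sol_def)
  have "ns n E x i \<ge> 0" using ns_nonneg[OF nn] .
  thus ?thesis using assms nn by (cases "x i > 0") (auto simp: sol_def)
qed

lemma sol_zero: assumes "sol n E x" "j \<in> {1..n}" "\<not> x j > 0" shows "x j = 0"
  using assms by (force simp: sol_def)

lemma one_nb:
  assumes sx: "sol n E x" and s: "s \<in> {1..n}" "x s > 0" and b: "b \<in> {1..n}" "x b > 0" "E s b"
    and u: "\<forall>c\<in>{1..n}. x c > 0 \<longrightarrow> E s c \<longrightarrow> c = b"
  shows "x s + x b = 1 \<and> (\<forall>c\<in>{1..n}. x c > 0 \<longrightarrow> E b c \<longrightarrow> c = s)"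
proof -
  have nn: "\<forall>i\<in>{1..n}. x i \<ge> 0" using sx by (simp add: sol_def)
  have "ns n E x s = adj_matrix E s b * x b"
    by (rule ns_single[OF b(1)]) (use u sol_zero[OF sx] in blast)
  hence "ns n E x s = x b" using b by (simp add: adj_matrix_def)
  moreover have "x s + ns n E x s = 1" using sx s unfolding sol_def by blast
  ultimately have sb: "x s + x b = 1" by linarith
  have "\<forall>c\<in>{1..n}. x c > 0 \<longrightarrow> E b c \<longrightarrow> c = s"
  proof (intro ballI impI; rule ccontr)
    fix c assume c: "c \<in> {1..n}" "x c > 0" "E b c" "c \<noteq> s"
    have "(\<Sum>j\<in>{s,c}. adj_matrix E b j * x j) \<le> ns n E x b"
      unfolding ns_def using s c nn by (intro sum_mono2) (auto simp: adj_matrix_def)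
    moreover have "(\<Sum>j\<in>{s,c}. adj_matrix E b j * x j) = x s + x c"
      using c Esym[OF b(3)] by (simp add: adj_matrix_def)
    moreover have "x b + ns n E x b = 1" using sx b unfolding sol_def by blast
    ultimately show False using sb c by linarith
  qed
  thus ?thesis using sb by blast
qed

lemma struct_nb:
  assumes sx: "sol n E x" and a: "a \<in> {1..n}" "x a > 0" and b: "b \<in> {1..n}" "x b > 0" "E a b"
  shows "\<forall>c\<in>{1..n}. x c > 0 \<longrightarrow> E a c \<longrightarrow> c = b"
proof -
  define one where "one s \<longleftrightarrow> (\<exists>b\<in>{1..n}. x b > 0 \<and> E s b \<and> (\<forall>c\<in>{1..n}. x c > 0 \<longrightarrow> E s c \<longrightarrow> c = b))" for s
  define U where "U = {s\<in>{1..n}. x s > 0 \<and> (\<exists>b\<in>{1..n}. x b > 0 \<and> E s b) \<and> \<not> one s}"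
  have "U = {}"
  proof (rule ccontr)
    assume ne: "U \<noteq> {}"
    have sub: "U \<subseteq> {1..n}" unfolding U_def by auto
    have deg: "\<And>s. s \<in> U \<Longrightarrow> \<exists>b c. b \<noteq> c \<and> b \<in> U \<and> c \<in> U \<and> E s b \<and> E s c"
    proof -
      fix s assume sU: "s \<in> U"
      have sV: "s \<in> {1..n}" "x s > 0" and nb: "\<exists>b\<in>{1..n}. x b > 0 \<and> E s b" and no: "\<not> one s"
        using sU unfolding U_def by auto
      have inU: "t \<in> U" if t: "t \<in> {1..n}" "x t > 0" "E s t" for t
      proof -
        have "\<not> one t"
        proof
          assume "one t"
          then obtain b' where b': "b' \<in> {1..n}" "x b' > 0" "E t b'" "\<forall>c\<in>{1..n}. x c > 0 \<longrightarrow> E t c \<longrightarrow> c = b'"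
            unfolding one_def by blast
          have "b' = s" using b'(4) sV Esym[OF t(3)] by blast
          hence "\<forall>c\<in>{1..n}. x c > 0 \<longrightarrow> E s c \<longrightarrow> c = t"
            using one_nb[OF sx t(1,2) b'(1,2,3) b'(4)] by blast
          thus False using no t unfolding one_def by blast
        qed
        thus ?thesis unfolding U_def using t sV Esym[OF t(3)] by blast
      qed
      obtain b1 where b1: "b1 \<in> {1..n}" "x b1 > 0" "E s b1" using nb by blast
      obtain c1 where c1: "c1 \<in> {1..n}" "x c1 > 0" "E s c1" "c1 \<noteq> b1"
        using no b1 unfolding one_def by blast
      show "\<exists>b c. b \<noteq> c \<and> b \<in> U \<and> c \<in> U \<and> E s b \<and> E s c"
        using inU[OF b1] inU[OF c1(1-3)] b1 c1 by blast
    qed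
    show False by (rule nocyc_set[OF sub ne deg])
  qed
  hence "a \<notin> U" by simp
  hence "one a" using a b unfolding U_def by blast
  then obtain b' where "b' \<in> {1..n}" "\<forall>c\<in>{1..n}. x c > 0 \<longrightarrow> E a c \<longrightarrow> c = b'"
    unfolding one_def by blast
  moreover have "b = b'" using \<open>\<forall>c\<in>{1..n}. x c > 0 \<longrightarrow> E a c \<longrightarrow> c = b'\<close> b by blast
  ultimately show ?thesis by simp
qed

definition partner :: "(nat \<Rightarrow> real) \<Rightarrow> nat \<Rightarrow> nat \<Rightarrow> bool" where
  "partner x u v \<longleftrightarrow> v \<in> {1..n} \<and> x v > 0 \<and> E u v \<and> x u + x v = 1 \<and>
     (\<forall>c\<in>{1..n}. x c > 0 \<longrightarrow> E u c \<longrightarrow> c = v) \<and> (\<forall>c\<in>{1..n}. x c > 0 \<longrightarrow> E v c \<longrightarrow> c = u)"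

lemma partner_ex:
  assumes sx: "sol n E x" and u: "u \<in> {1..n}" "0 < x u" "x u < 1"
  shows "\<exists>v. partner x u v"
proof -
  have "x u + ns n E x u = 1" using sx u unfolding sol_def by blast
  hence "ns n E x u = 1 - x u" by linarith
  hence "ns n E x u \<noteq> 0" using u by simp
  then obtain v where v: "v \<in> {1..n}" "E u v" "x v \<noteq> 0" using ns_pos_ex[of n E x u] by blast
  have "x v \<ge> 0" using sx v(1) unfolding sol_def by blast
  hence vp: "x v > 0" using v(3) by linarith
  have un: "\<forall>c\<in>{1..n}. x c > 0 \<longrightarrow> E u c \<longrightarrow> c = v" using struct_nb[OF sx u(1,2) v(1) vp v(2)] .
  have "x u + x v = 1 \<and> (\<forall>c\<in>{1..n}. x c > 0 \<longrightarrow> E v c \<longrightarrow> c = u)"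
    using one_nb[OF sx u(1,2) v(1) vp v(2) un] .
  hence "partner x u v" using un v vp unfolding partner_def by blast
  thus ?thesis ..
qed

lemma partner_sym: "partner x u v \<Longrightarrow> u \<in> {1..n} \<Longrightarrow> x u > 0 \<Longrightarrow> partner x v u"
proof -
  assume p: "partner x u v" and u: "u \<in> {1..n}" "x u > 0"
  have "E u v" using p unfolding partner_def by blast
  hence "E v u" by (rule Esym)
  moreover have "x u + x v = 1" using p unfolding partner_def by blast
  hence "x v + x u = 1" by linarith
  ultimately show ?thesis using p u unfolding partner_def by blast
qed


lemma round_step:
  assumes sx: "sol n E x" and Fne: "{i\<in>{1..n}. 0 < x i \<and> x i < 1} \<noteq> {}"
  shows "\<exists>x'. sol n E x' \<and> (\<Sum>i\<in>{1..n}. x' i) = (\<Sum>i\<in>{1..n}. x i) \<and>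
     {i\<in>{1..n}. 0 < x' i \<and> x' i < 1} \<subset> {i\<in>{1..n}. 0 < x i \<and> x i < 1}"
proof -
  define F where "F = {i\<in>{1..n}. 0 < x i \<and> x i < 1}"
  define W where "W = {w\<in>{1..n}. x w = 0 \<and> (\<forall>j\<in>{1..n}. E w j \<longrightarrow> x j \<noteq> 1)}"
  have nn: "\<forall>i\<in>{1..n}. x i \<ge> 0" using sx unfolding sol_def by blast
  have le1: "\<And>i. i \<in> {1..n} \<Longrightarrow> x i \<le> 1" using sol_le1[OF sx] .
  have ge1: "\<And>i. i \<in> {1..n} \<Longrightarrow> x i + ns n E x i \<ge> 1" using sx unfolding sol_def by blast
  have eq1: "\<And>i. i \<in> {1..n} \<Longrightarrow> x i > 0 \<Longrightarrow> x i + ns n E x i = 1" using sx unfolding sol_def by blast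
  have key: "\<exists>u\<in>F. \<exists>v. partner x u v \<and> (\<forall>w\<in>W. \<not> E v w)"
  proof (rule ccontr)
    assume "\<not> ?thesis"
    hence H: "\<And>u v. u \<in> F \<Longrightarrow> partner x u v \<Longrightarrow> \<exists>w\<in>W. E v w" by blast
    define U where "U = W \<union> F"
    have sub: "U \<subseteq> {1..n}" unfolding U_def W_def F_def by auto
    have ne: "U \<noteq> {}" using Fne unfolding U_def F_def by auto
    have deg: "\<And>s. s \<in> U \<Longrightarrow> \<exists>b c. b \<noteq> c \<and> b \<in> U \<and> c \<in> U \<and> E s b \<and> E s c"
    proof -
      fix s assume sU: "s \<in> U"
      show "\<exists>b c. b \<noteq> c \<and> b \<in> U \<and> c \<in> U \<and> E s b \<and> E s c"
      proof (cases "s \<in> F")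
        case True
        hence s: "s \<in> {1..n}" "0 < x s" "x s < 1" unfolding F_def by auto
        obtain v where p: "partner x s v" using partner_ex[OF sx s] by blast
        have v: "v \<in> {1..n}" "x v > 0" "E s v" "x s + x v = 1" using p unfolding partner_def by blast+
        have vF: "v \<in> F" unfolding F_def using v s by auto
        have "partner x v s" using partner_sym[OF p s(1,2)] .
        then obtain w where w: "w \<in> W" "E s w" using H[OF vF] by blast
        have "w \<noteq> v" using w v unfolding W_def by auto
        thus ?thesis using w v vF unfolding U_def by blast
      next
        case False
        hence sW: "s \<in> W" using sU unfolding U_def by blast
        hence s: "s \<in> {1..n}" "x s = 0" "\<forall>j\<in>{1..n}. E s j \<longrightarrow> x j \<noteq> 1" unfolding W_def by auto
        have nsge: "ns n E x s \<ge> 1" using ge1[OF s(1)] s(2) by simp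
        hence "ns n E x s \<noteq> 0" by simp
        then obtain j where j: "j \<in> {1..n}" "E s j" "x j \<noteq> 0" using ns_pos_ex[of n E x s] by blast
        have inF: "k \<in> F" if "k \<in> {1..n}" "E s k" "x k \<noteq> 0" for k
        proof -
          have "x k \<ge> 0" "x k \<le> 1" "x k \<noteq> 1" using that nn le1 s(3) by auto
          thus ?thesis using that unfolding F_def by auto
        qed
        have jF: "j \<in> F" using inF[OF j] .
        have "\<exists>k\<in>F. E s k \<and> k \<noteq> j"
        proof (rule ccontr)
          assume nk: "\<not> (\<exists>k\<in>F. E s k \<and> k \<noteq> j)"
          have "ns n E x s = adj_matrix E s j * x j"
          proof (rule ns_single[OF j(1)])
            fix k assume k: "k \<in> {1..n}" "k \<noteq> j" "E s k"
            show "x k = 0"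
            proof (rule ccontr)
              assume "x k \<noteq> 0"
              hence "k \<in> F" using inF k by blast
              thus False using nk k by blast
            qed
          qed
          hence "ns n E x s = x j" using j by (simp add: adj_matrix_def)
          moreover have "x j < 1" using jF unfolding F_def by auto
          ultimately show False using nsge by linarith
        qed
        then obtain k where k: "k \<in> F" "E s k" "k \<noteq> j" by blast
        show ?thesis using k jF j unfolding U_def by blast
      qed
    qed
    show False by (rule nocyc_set[OF sub ne deg])
  qed
  then obtain u v where uF: "u \<in> F" and p: "partner x u v" and noW: "\<forall>w\<in>W. \<not> E v w" by blast
  have u: "u \<in> {1..n}" "0 < x u" "x u < 1" using uF unfolding F_def by auto
  have v: "v \<in> {1..n}" "x v > 0" "E u v" "x u + x v = 1"
    and un1: "\<forall>c\<in>{1..n}. x c > 0 \<longrightarrow> E u c \<longrightarrow> c = v"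
    and un2: "\<forall>c\<in>{1..n}. x c > 0 \<longrightarrow> E v c \<longrightarrow> c = u"
    using p unfolding partner_def by blast+
  have Evu: "E v u" using Esym[OF v(3)] .
  have uv: "u \<noteq> v" using v(3) Eirr by metis
  define x' where "x' = x(u := 1, v := 0)"
  have x'u: "x' u = 1" and x'v: "x' v = 0" and x'o: "\<And>j. j \<noteq> u \<Longrightarrow> j \<noteq> v \<Longrightarrow> x' j = x j"
    unfolding x'_def using uv by auto
  have nn': "\<forall>i\<in>{1..n}. x' i \<ge> 0" using nn x'u x'v x'o by (metis order_refl zero_le_one)
  have gen: "(\<Sum>j\<in>{1..n}. c j * x' j) = (\<Sum>j\<in>{1..n}. c j * x j) + c u * (1 - x u) - c v * x v" for c :: "nat \<Rightarrow> real"
  proof -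
    have "(\<Sum>j\<in>{1..n}. c j * x' j) = (\<Sum>j\<in>{1..n}. c j * x j + ((if j = u then c u * (1 - x u) else 0) + (if j = v then - (c v * x v) else 0)))"
    proof (rule sum.cong[OF refl])
      fix j assume "j \<in> {1..n}"
      show "c j * x' j = c j * x j + ((if j = u then c u * (1 - x u) else 0) + (if j = v then - (c v * x v) else 0))"
        using uv x'u x'v x'o by (cases "j = u"; cases "j = v") (auto simp: algebra_simps)
    qed
    also have "\<dots> = (\<Sum>j\<in>{1..n}. c j * x j) + c u * (1 - x u) - c v * x v"
      using u(1) v(1) by (simp add: sum.distrib)
    finally show ?thesis .
  qed
  have nsx': "ns n E x' i = ns n E x i + adj_matrix E i u * (1 - x u) - adj_matrix E i v * x v" for i
    unfolding ns_def by (rule gen)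
  have sumx': "(\<Sum>i\<in>{1..n}. x' i) = (\<Sum>i\<in>{1..n}. x i)"
    using gen[of "\<lambda>_. 1"] v(4) by simp
  have good: "x' i + ns n E x' i \<ge> 1 \<and> (x' i > 0 \<longrightarrow> x' i + ns n E x' i = 1)" if i: "i \<in> {1..n}" for i
  proof -
    consider "i = u" | "i = v" | "i \<noteq> u" "i \<noteq> v" "x i > 0" | "i \<noteq> u" "i \<noteq> v" "\<not> x i > 0" by blast
    thus ?thesis
    proof cases
      case 1
      have "ns n E x u = 1 - x u" using eq1[OF u(1,2)] by linarith
      hence "ns n E x' u = 0" using nsx'[of u] v(3,4) Eirr[of u] by (simp add: adj_matrix_def)
      thus ?thesis using 1 x'u by simp
    next
      case 2
      have "ns n E x v = 1 - x v" using eq1[OF v(1,2)] by linarith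
      hence "ns n E x' v = 1" using nsx'[of v] Evu v(4) Eirr[of v] by (simp add: adj_matrix_def)
      thus ?thesis using 2 x'v by simp
    next
      case 3
      have "\<not> E i u"
      proof
        assume "E i u" hence "E u i" by (rule Esym)
        thus False using un1 i 3 by blast
      qed
      moreover have "\<not> E i v"
      proof
        assume "E i v" hence "E v i" by (rule Esym)
        thus False using un2 i 3 by blast
      qed
      ultimately have "ns n E x' i = ns n E x i" using nsx'[of i] by (simp add: adj_matrix_def)
      thus ?thesis using 3 x'o eq1[OF i] by simp
    next
      case 4
      have xi: "x i = 0" using sol_zero[OF sx i 4(3)] .
      have x'i: "x' i = 0" using x'o[OF 4(1,2)] xi by simp
      have "ns n E x' i \<ge> 1"
      proof (cases "E i v")
        case True
        hence "i \<notin> W" using noW Esym by blast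
        then obtain j where j: "j \<in> {1..n}" "E i j" "x j = 1" using i xi unfolding W_def by blast
        have "j \<noteq> u" "j \<noteq> v" using j u v by auto
        hence "x' j = 1" using x'o j by simp
        thus ?thesis using ns_ge_term[where x=x' and i=i and E=E, OF nn' j(1,2)] by simp
      next
        case False
        have "adj_matrix E i u * (1 - x u) \<ge> 0" using u by (simp add: adj_matrix_def)
        moreover have "ns n E x i \<ge> 1" using ge1[OF i] xi by simp
        ultimately show ?thesis using nsx'[of i] False by (simp add: adj_matrix_def)
      qed
      thus ?thesis using x'i by simp
    qed
  qed
  have sx': "sol n E x'"
    unfolding sol_def
  proof (intro conjI)
    show "\<forall>i. i \<notin> {1..n} \<longrightarrow> x' i = 0"
    proof (intro allI impI)
      fix i assume "i \<notin> {1..n}"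
      moreover hence "i \<noteq> u" "i \<noteq> v" using u v by auto
      ultimately show "x' i = 0" using x'o sx unfolding sol_def by simp
    qed
  qed (use nn' good in auto)
  have "{i\<in>{1..n}. 0 < x' i \<and> x' i < 1} \<subseteq> F - {u}"
  proof
    fix i assume "i \<in> {i\<in>{1..n}. 0 < x' i \<and> x' i < 1}"
    hence i: "i \<in> {1..n}" "0 < x' i" "x' i < 1" by auto
    have "i \<noteq> u" "i \<noteq> v" using i x'u x'v by auto
    thus "i \<in> F - {u}" using i x'o[of i] unfolding F_def by simp
  qed
  hence "{i\<in>{1..n}. 0 < x' i \<and> x' i < 1} \<subset> F" using uF by blast
  thus ?thesis using sx' sumx' unfolding F_def by blast
qed

lemma round_all:
  "sol n E x \<Longrightarrow> \<exists>x'. sol n E x' \<and> (\<Sum>i\<in>{1..n}. x' i) = (\<Sum>i\<in>{1..n}. x i) \<and>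
     {i\<in>{1..n}. 0 < x' i \<and> x' i < 1} = {}"
proof (induction "card {i\<in>{1..n}. 0 < x i \<and> x i < 1}" arbitrary: x rule: less_induct)
  case less
  show ?case
  proof (cases "{i\<in>{1..n}. 0 < x i \<and> x i < 1} = {}")
    case True thus ?thesis using less.prems by blast
  next
    case False
    then obtain x' where x': "sol n E x'" "(\<Sum>i\<in>{1..n}. x' i) = (\<Sum>i\<in>{1..n}. x i)"
      "{i\<in>{1..n}. 0 < x' i \<and> x' i < 1} \<subset> {i\<in>{1..n}. 0 < x i \<and> x i < 1}"
      using round_step[OF less.prems] by blast
    have "card {i\<in>{1..n}. 0 < x' i \<and> x' i < 1} < card {i\<in>{1..n}. 0 < x i \<and> x i < 1}"
      using x'(3) by (intro psubset_card_mono) auto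
    from less.hyps[OF this x'(1)] x'(2) show ?thesis by metis
  qed
qed


lemma fin_mis: "finite (card ` {S. maximal_independent_set n E S})"
proof -
  have "{S. maximal_independent_set n E S} \<subseteq> Pow {1..n}"
    unfolding maximal_independent_set_def independent_set_def by auto
  hence "finite {S. maximal_independent_set n E S}" using finite_subset by blast
  thus ?thesis by simp
qed

lemma integral_bound:
  assumes sx: "sol n E x" and F0: "{i\<in>{1..n}. 0 < x i \<and> x i < 1} = {}"
  shows "real (indep_dom_number n E) \<le> (\<Sum>i\<in>{1..n}. x i)"
proof -
  have nn: "\<forall>i\<in>{1..n}. x i \<ge> 0" using sx unfolding sol_def by blast
  have ge1: "\<And>i. i \<in> {1..n} \<Longrightarrow> x i + ns n E x i \<ge> 1" using sx unfolding sol_def by blast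
  have eq1: "\<And>i. i \<in> {1..n} \<Longrightarrow> x i > 0 \<Longrightarrow> x i + ns n E x i = 1" using sx unfolding sol_def by blast
  have bin: "x i = 0 \<or> x i = 1" if "i \<in> {1..n}" for i
    using that nn sol_le1[OF sx that] F0 by force
  define S where "S = {i\<in>{1..n}. x i = 1}"
  have SV: "S \<subseteq> {1..n}" unfolding S_def by auto
  have "(\<Sum>i\<in>{1..n}. x i) = (\<Sum>i\<in>S. x i) + (\<Sum>i\<in>{1..n} - S. x i)"
    using SV by (metis add.commute finite_atLeastAtMost sum.subset_diff)
  also have "(\<Sum>i\<in>{1..n} - S. x i) = 0"
  proof (intro sum.neutral ballI)
    fix i assume "i \<in> {1..n} - S"
    thus "x i = 0" using bin[of i] unfolding S_def by auto
  qed
  also have "(\<Sum>i\<in>S. x i) = real (card S)" unfolding S_def by simp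
  finally have sumS: "(\<Sum>i\<in>{1..n}. x i) = real (card S)" by simp
  have indep: "independent_set n E S"
    unfolding independent_set_def
  proof (intro conjI ballI)
    show "S \<subseteq> {1..n}" by (rule SV)
    fix a b assume a: "a \<in> S" and b: "b \<in> S"
    show "\<not> E a b"
    proof
      assume Eab: "E a b"
      have "ns n E x a \<ge> x b" using ns_ge_term[where x=x and i=a and E=E, OF nn _ Eab] b SV by blast
      moreover have aV: "a \<in> {1..n}" "x a = 1" using a unfolding S_def by auto
      moreover have "x a + ns n E x a = 1" using eq1[OF aV(1)] aV(2) by simp
      moreover have "x b = 1" using b unfolding S_def by auto
      ultimately show False by linarith
    qed
  qed
  have mis: "maximal_independent_set n E S"
    unfolding maximal_independent_set_def
  proof (intro conjI indep notI)
    assume "\<exists>T. independent_set n E T \<and> S \<subset> T"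
    then obtain T where T: "independent_set n E T" "S \<subset> T" by blast
    then obtain t where t: "t \<in> T" "t \<notin> S" by blast
    have tV: "t \<in> {1..n}" using T t unfolding independent_set_def by auto
    hence xt: "x t = 0" using bin t unfolding S_def by auto
    hence "ns n E x t \<noteq> 0" using ge1[OF tV] by simp
    then obtain j where j: "j \<in> {1..n}" "E t j" "x j \<noteq> 0" using ns_pos_ex[of n E x t] by blast
    hence "j \<in> S" using bin unfolding S_def by auto
    hence "j \<in> T" using T by blast
    thus False using T(1) t j unfolding independent_set_def by blast
  qed
  have "indep_dom_number n E \<le> card S"
    unfolding indep_dom_number_def using mis fin_mis by (intro Min_le) auto
  thus ?thesis using sumS by simp
qed

lemma exists_sol: "\<exists>x. sol n E x \<and> (\<Sum>i\<in>{1..n}. x i) = real (indep_dom_number n E)"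
proof -
  obtain S0 where S0: "independent_set n E S0" "\<forall>T. independent_set n E T \<longrightarrow> card T \<le> card S0"
  proof -
    have "independent_set n E {}" by (simp add: independent_set_def)
    moreover have "\<forall>T. independent_set n E T \<longrightarrow> card T < n + 1"
    proof (intro allI impI)
      fix T assume "independent_set n E T"
      hence "card T \<le> card {1..n}" unfolding independent_set_def by (intro card_mono) auto
      thus "card T < n + 1" by simp
    qed
    ultimately show ?thesis using that Lattices_Big.ex_has_greatest_nat[of "independent_set n E" "{}" card "n+1"] by blast
  qed
  have "maximal_independent_set n E S0"
    unfolding maximal_independent_set_def
  proof (intro conjI S0(1) notI)
    assume "\<exists>T. independent_set n E T \<and> S0 \<subset> T"
    then obtain T where T: "independent_set n E T" "S0 \<subset> T" by blast
    have "finite T" using T(1) unfolding independent_set_def using finite_subset by blast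
    hence "card S0 < card T" using T(2) by (rule psubset_card_mono)
    thus False using S0(2) T(1) by fastforce
  qed
  hence "card ` {S. maximal_independent_set n E S} \<noteq> {}" by blast
  hence "indep_dom_number n E \<in> card ` {S. maximal_independent_set n E S}"
    unfolding indep_dom_number_def using fin_mis by (rule Min_in[rotated])
  then obtain S where "S \<in> {S. maximal_independent_set n E S}" and cS0: "indep_dom_number n E = card S"
    by (rule imageE)
  hence mis: "maximal_independent_set n E S" and cS: "card S = indep_dom_number n E" by auto
  have ind: "independent_set n E S" using mis unfolding maximal_independent_set_def by blast
  have SV: "S \<subseteq> {1..n}" using ind unfolding independent_set_def by blast
  define x :: "nat \<Rightarrow> real" where "x i = (if i \<in> S then 1 else 0)" for i
  have nn: "\<forall>i\<in>{1..n}. x i \<ge> 0" unfolding x_def by simp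
  have nsS: "ns n E x i = 0" if "i \<in> S" for i
    unfolding ns_def
  proof (rule sum.neutral, rule ballI)
    fix j assume "j \<in> {1..n}"
    show "adj_matrix E i j * x j = 0"
    proof (cases "j \<in> S")
      case True
      hence "\<not> E i j" using ind that unfolding independent_set_def by blast
      thus ?thesis by (simp add: adj_matrix_def)
    qed (simp add: x_def)
  qed
  have nsN: "ns n E x i \<ge> 1" if i: "i \<in> {1..n}" "i \<notin> S" for i
  proof -
    have "\<not> independent_set n E (insert i S)"
      using mis i unfolding maximal_independent_set_def by blast
    then obtain a b where ab: "a \<in> insert i S" "b \<in> insert i S" "E a b"
      using SV i unfolding independent_set_def by blast
    have "\<exists>j\<in>S. E i j"
    proof -
      have "\<not> (a \<in> S \<and> b \<in> S)" using ind ab unfolding independent_set_def by blast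
      moreover have "\<not> (a = i \<and> b = i)" using ab Eirr by blast
      ultimately show ?thesis using ab Esym by blast
    qed
    then obtain j where j: "j \<in> S" "E i j" by blast
    have "ns n E x i \<ge> x j" using ns_ge_term[where x=x and i=i and E=E, OF nn _ j(2)] j SV by blast
    thus ?thesis using j unfolding x_def by simp
  qed
  have "sol n E x"
    unfolding sol_def
  proof (intro conjI)
    show "\<forall>i. i \<notin> {1..n} \<longrightarrow> x i = 0" using SV unfolding x_def by auto
    show "\<forall>i\<in>{1..n}. x i \<ge> 0" by (rule nn)
    show "\<forall>i\<in>{1..n}. 1 \<le> x i + ns n E x i"
      using nsS nsN by (auto simp: x_def)
    show "\<forall>i\<in>{1..n}. 0 < x i \<longrightarrow> x i + ns n E x i = 1"
      using nsS by (auto simp: x_def split: if_splits)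
  qed
  moreover have "(\<Sum>i\<in>{1..n}. x i) = real (card S)"
    unfolding x_def using SV by (simp add: sum.If_cases Int_absorb1)
  ultimately show ?thesis using cS by auto
qed

end

theorem theorem2:
  fixes n :: nat and E :: "nat \<Rightarrow> nat \<Rightarrow> bool"
  assumes "forest n E"
  defines "M \<equiv> (\<lambda>i j. adj_matrix E i j + (if i = j then 1 else 0))"
  defines "e \<equiv> (\<lambda>i::nat. 1::real)"
  shows "(\<exists>x. solves_LCP n M (\<lambda>i. - e i) x \<and>
            (\<Sum>i=1..n. e i * x i) = real (indep_dom_number n E)) \<and>
         (\<forall>x. solves_LCP n M (\<lambda>i. - e i) x \<longrightarrow>
            real (indep_dom_number n E) \<le> (\<Sum>i=1..n. e i * x i))"
  unfolding M_def e_def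
proof (simp only: sol_iff mult_1 , intro conjI allI impI)
  show "\<exists>x. sol n E x \<and> (\<Sum>i = 1..n. x i) = real (indep_dom_number n E)"
    using exists_sol[OF assms(1)] by blast
  fix x assume "sol n E x"
  then obtain x' where "sol n E x'" "(\<Sum>i\<in>{1..n}. x' i) = (\<Sum>i\<in>{1..n}. x i)"
     "{i\<in>{1..n}. 0 < x' i \<and> x' i < 1} = {}" using round_all[OF assms(1)] by blast
  thus "real (indep_dom_number n E) \<le> (\<Sum>i = 1..n. x i)"
    using integral_bound[OF assms(1)] by metis
qed

end
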